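(* Suppose Assumption A1 holds, $\mathbf X\sim\mu\in\mathcal P_{ac}(\mathbb R^p)$, and $\mathcal G$ acts freely on $\mathcal GB$. Then for $(\mathbf x_0,\mathbf y_0)$ in a set of full measure under the law of $(\mathbf X,R(\mathbf X))$, the minimizer $S(\mathbf x_0,\mathbf y_0)=\arg\min_{Q\in\mathcal G}\|Q^\top\mathbf x_0-\mathbf y_0\|^2$ is unique, and $S$ is continuous at $(\mathbf x_0,\mathbf y_0)$ in the sense that for every sequence $(\mathbf x_n,\mathbf y_n)\to(\mathbf x_0,\mathbf y_0)$ and every choice of minimizers $Q_n\in\arg\min_{Q\in\mathcal G}\|Q^\top\mathbf x_n-\mathbf y_n\|^2$, $Q_n\to S(\mathbf x_0,\mathbf y_0)$.
   Context: $\mathcal G$ is a compact subgroup of $\mathrm O(p)$; $\mathrm{Uniform}(\mathcal G)$ its normalized Haar measure; $\mathcal P_{ac}(\mathbb R^p)$ Borel probability measures with a Lebesgue density; $\nu$ a fixed Borel probability measure. A1: there is a Borel $B$ with $\nu(B)=1$ such that every orbit $\{Q\mathbf x:Q\in\mathcal G\}$ meets $B$ in at most one point; $\mathcal GB=\{Q\mathbf x:Q\in\mathcal G,\mathbf x\in B\}$; $q:\mathcal GB\to B$, $q(Q\mathbf x)=\mathbf x$. $\mathcal G$ acts freely on $\mathcal GB$ if $Q\mathbf y=\mathbf y$ with $\mathbf y\in B$, $Q\in\mathcal G$ implies $Q=I$. Cost $c(\mathbf x,\mathbf h)=\min_{Q\in\mathcal G}\|Q^\top\mathbf x-\mathbf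 h\|^2$. $R$ is the population rank map: the $\mu$-a.e. unique Borel map such that the law of $(\mathbf X,R(\mathbf X))$ is the unique coupling of $\mu$ and $\nu$ whose support is $c$-cyclically monotone (i.e. for all $N$ and $(\mathbf x_i,\mathbf y_i)$ in the support, $\sum_{i=1}^Nc(\mathbf x_i,\mathbf y_i)\le\sum_{i=1}^Nc(\mathbf x_i,\mathbf y_{i+1})$, $\mathbf y_{N+1}=\mathbf y_1$); equivalently $R=q\circ\nabla\psi$ where $\nabla\psi$ is the a.e. unique gradient of a convex function pushing the law of $S\mathbf X$ to that of $S\mathbf H$ ($S\sim\mathrm{Uniform}(\mathcal G)$, $\mathbf H\sim\nu$, independent). *)

theory Defs
  imports "HOL-Probability.Probability"
begin

type_synonym 'p vec = "real ^ 'p"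
type_synonym 'p mat = "real ^ 'p ^ 'p"

definition compact_orth_subgroup :: "'p::finite mat set \<Rightarrow> bool" where
  "compact_orth_subgroup G \<longleftrightarrow> compact G \<and> G \<subseteq> {Q. orthogonal_matrix Q} \<and>
     mat 1 \<in> G \<and> (\<forall>Q\<in>G. \<forall>Q'\<in>G. Q ** Q' \<in> G) \<and> (\<forall>Q\<in>G. transpose Q \<in> G)"

definition costG :: "'p::finite mat set \<Rightarrow> 'p vec \<Rightarrow> 'p vec \<Rightarrow> real" where
  "costG G x h = (INF Q\<in>G. (norm (transpose Q *v x - h))\<^sup>2)"

definition argminG :: "'p::finite mat set \<Rightarrow> 'p vec \<Rightarrow> 'p vec \<Rightarrow> 'p mat set" where
  "argminG G x y = {Q \<in> G. \<forall>Q'\<in>G. (norm (transpose Q *v x - y))\<^sup>2 \<le> (norm (transpose Q' *v x - y))\<^sup>2}"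

definition msupport :: "'a::topological_space measure \<Rightarrow> 'a set" where
  "msupport M = {z. \<forall>U. open U \<and> z \<in> U \<longrightarrow> emeasure M U > 0}"

definition c_cyclically_monotone :: "('a \<Rightarrow> 'b \<Rightarrow> real) \<Rightarrow> ('a \<times> 'b) set \<Rightarrow> bool" where
  "c_cyclically_monotone c \<Gamma> \<longleftrightarrow>
     (\<forall>N::nat. \<forall>xs ys. N > 0 \<longrightarrow> (\<forall>i<N. (xs i, ys i) \<in> \<Gamma>) \<longrightarrow>
        (\<Sum>i<N. c (xs i) (ys i)) \<le> (\<Sum>i<N. c (xs i) (ys ((i + 1) mod N))))"

end

theory Submission
  imports Defs
begin


lemma null_lines:
  fixes S :: "'a::euclidean_space set" and b :: 'a
  assumes S: "S \<in> sets borel" and b: "b \<noteq> 0"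
    and cnt: "\<And>x. countable {t::real. x + t *\<^sub>R b \<in> S}"
  shows "S \<in> null_sets lborel"
proof -
  have PS: "pair_sigma_finite (lborel :: 'a measure) (lborel :: real measure)"
    by (intro pair_sigma_finite.intro sigma_finite_lborel)
  define W where "W = {z::'a\<times>real. fst z + snd z *\<^sub>R b \<in> S}"
  have Wm: "W \<in> sets (lborel \<Otimes>\<^sub>M lborel)"
  proof -
    have "(\<lambda>z::'a\<times>real. fst z + snd z *\<^sub>R b) \<in> borel_measurable (lborel \<Otimes>\<^sub>M lborel)"
      by measurable
    then have "(\<lambda>z::'a\<times>real. fst z + snd z *\<^sub>R b) -` S \<inter> space (lborel \<Otimes>\<^sub>M lborel) \<in> sets (lborel \<Otimes>\<^sub>M lborel)"
      using S by (rule measurable_sets)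
    then show ?thesis by (simp add: W_def vimage_def space_pair_measure)
  qed
  have "emeasure (lborel \<Otimes>\<^sub>M lborel) W = (\<integral>\<^sup>+x. emeasure lborel (Pair x -` W) \<partial>lborel)"
    by (rule lborel.emeasure_pair_measure_alt[OF Wm])
  also have "\<dots> = (\<integral>\<^sup>+x. 0 \<partial>lborel)"
  proof -
    have "\<And>x. emeasure lborel (Pair x -` W) = 0"
    proof -
      fix x :: 'a
      have "Pair x -` W = {t::real. x + t *\<^sub>R b \<in> S}" by (simp add: W_def vimage_def)
      then show "emeasure lborel (Pair x -` W) = 0"
        using countable_imp_null_set_lborel[OF cnt[of x]] by (simp add: null_sets_def)
    qed
    then show ?thesis by simp
  qed
  finally have W0: "emeasure (lborel \<Otimes>\<^sub>M lborel) W = 0" by simp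
  have "emeasure (lborel \<Otimes>\<^sub>M lborel) W = (\<integral>\<^sup>+t. emeasure lborel ((\<lambda>x. (x, t)) -` W) \<partial>lborel)"
    by (rule pair_sigma_finite.emeasure_pair_measure_alt2[OF PS Wm])
  also have "\<dots> = (\<integral>\<^sup>+(t::real). emeasure lborel S \<partial>lborel)"
  proof -
    have "\<And>t. emeasure lborel ((\<lambda>x. (x, t)) -` W) = emeasure lborel S"
    proof -
      fix t :: real
      have "(\<lambda>x. (x, t)) -` W = (\<lambda>x. t *\<^sub>R b + x) -` S \<inter> space lborel"
        by (auto simp: W_def add.commute)
      then have "emeasure lborel ((\<lambda>x. (x, t)) -` W) = emeasure (distr lborel borel ((+) (t *\<^sub>R b))) S"
        using S by (simp add: emeasure_distr)
      then show "emeasure lborel ((\<lambda>x. (x, t)) -` W) = emeasure lborel S"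
        by (simp add: lborel_distr_plus)
    qed
    then show ?thesis by simp
  qed
  also have "\<dots> = emeasure lborel S * \<infinity>"
    by (simp add: nn_integral_const)
  finally have "emeasure lborel S * \<infinity> = 0" using W0 by simp
  then have "emeasure lborel S = 0"
    by (simp add: ennreal_mult_eq_top_iff)
  then show ?thesis using S by auto
qed


definition FQ :: "'p::finite mat \<Rightarrow> 'p vec \<Rightarrow> 'p vec \<Rightarrow> real" where
  "FQ Q x y = (norm (transpose Q *v x - y))\<^sup>2"

lemma norm_orth_mult:
  fixes Q :: "'p::finite mat"
  assumes "orthogonal_matrix Q"
  shows "norm (Q *v x) = norm x"
proof -
  have "orthogonal_transformation ((*v) Q)"
    using assms by (simp add: orthogonal_transformation_matrix matrix_vector_mul_linear)
  then show ?thesis by (rule orthogonal_transformation_norm)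
qed

lemma FQ_inner:
  fixes Q :: "'p::finite mat"
  assumes "orthogonal_matrix Q"
  shows "FQ Q x y = (norm x)\<^sup>2 + (norm y)\<^sup>2 - 2 * (x \<bullet> (Q *v y))"
proof -
  define a where "a = transpose Q *v x"
  have n: "norm a = norm x"
    unfolding a_def by (rule norm_orth_mult) (simp add: assms)
  have i: "a \<bullet> y = x \<bullet> (Q *v y)"
    unfolding a_def by (metis dot_lmul_matrix transpose_matrix_vector)
  have "FQ Q x y = a \<bullet> a - 2 * (a \<bullet> y) + y \<bullet> y"
    unfolding FQ_def power2_norm_eq_inner a_def[symmetric] by (simp add: inner_diff inner_commute)
  also have "\<dots> = (norm x)\<^sup>2 + (norm y)\<^sup>2 - 2 * (x \<bullet> (Q *v y))"
    using n i by (simp add: power2_norm_eq_inner[symmetric])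
  finally show ?thesis .
qed
lemma argminG_FQ: "argminG G x y = {Q \<in> G. \<forall>Q'\<in>G. FQ Q x y \<le> FQ Q' x y}"
  by (simp add: argminG_def FQ_def)

lemma costG_FQ: "costG G x y = (INF Q\<in>G. FQ Q x y)"
  by (simp add: costG_def FQ_def)

lemma cos_G:
  assumes "compact_orth_subgroup G"
  shows "compact G" "closed G" "G \<noteq> {}" "\<And>Q. Q \<in> G \<Longrightarrow> orthogonal_matrix Q"
    "\<And>Q Q'. Q \<in> G \<Longrightarrow> Q' \<in> G \<Longrightarrow> Q ** Q' \<in> G" "\<And>Q. Q \<in> G \<Longrightarrow> transpose Q \<in> G"
  using assms by (auto simp: compact_orth_subgroup_def compact_imp_closed)

lemma continuous_on_mv[continuous_intros]:
  fixes f :: "'a::topological_space \<Rightarrow> real^'m^'n" and g :: "'a \<Rightarrow> real^'m"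
  assumes "continuous_on S f" "continuous_on S g"
  shows "continuous_on S (\<lambda>w. f w *v g w)"
  unfolding matrix_vector_mult_def
  by (intro continuous_on_vec_lambda continuous_on_sum continuous_on_mult continuous_on_component assms)

lemma continuous_on_transpose[continuous_intros]:
  fixes f :: "'a::topological_space \<Rightarrow> real^'m^'n"
  assumes "continuous_on S f"
  shows "continuous_on S (\<lambda>w. transpose (f w))"
  unfolding transpose_def
  by (intro continuous_on_vec_lambda continuous_on_component assms)

lemma continuous_on_FQ[continuous_intros]:
  fixes f :: "'a::topological_space \<Rightarrow> real^'p::finite^'p"
  assumes "continuous_on S f" "continuous_on S g" "continuous_on S h"
  shows "continuous_on S (\<lambda>w. FQ (f w) (g w) (h w))"
  unfolding FQ_def by (intro continuous_intros assms)

lemma argmin_nonempty: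
  assumes "compact_orth_subgroup G"
  shows "argminG G x y \<noteq> {}"
proof -
  have "continuous_on G (\<lambda>Q. FQ Q x y)" by (intro continuous_intros)
  then obtain Q where "Q \<in> G" "\<forall>Q'\<in>G. FQ Q x y \<le> FQ Q' x y"
    using continuous_attains_inf[OF cos_G(1,3)[OF assms]] by blast
  then show ?thesis by (auto simp: argminG_FQ)
qed

lemma cost_eq:
  assumes "Q \<in> argminG G x y"
  shows "costG G x y = FQ Q x y"
  unfolding costG_FQ
  using assms by (intro cInf_eq_minimum) (auto simp: argminG_FQ)

lemma cost_le:
  assumes "Q \<in> G"
  shows "costG G x y \<le> FQ Q x y"
  unfolding costG_FQ
  by (rule cINF_lower[OF _ assms]) (auto simp: bdd_below_def FQ_def intro!: exI[of _ 0])



lemma mono2: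
  assumes G: "compact_orth_subgroup G"
    and ccm: "c_cyclically_monotone (costG G) \<Gamma>"
    and in1: "(x, y) \<in> \<Gamma>" and in2: "(x', y') \<in> \<Gamma>"
    and Q: "Q \<in> argminG G x y" and Q': "Q' \<in> argminG G x' y'"
  shows "0 \<le> (x - x') \<bullet> (Q *v y - Q' *v y')"
proof -
  define xs where "xs = (\<lambda>i::nat. if i = 0 then x else x')"
  define ys where "ys = (\<lambda>i::nat. if i = 0 then y else y')"
  have "(\<Sum>i<2. costG G (xs i) (ys i)) \<le> (\<Sum>i<2. costG G (xs i) (ys ((i + 1) mod 2)))"
    using ccm unfolding c_cyclically_monotone_def
    by (elim allE[of _ 2] allE[of _ xs] allE[of _ ys]) (auto simp: xs_def ys_def in1 in2)
  then have c: "costG G x y + costG G x' y' \<le> costG G x y' + costG G x' y"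
    by (simp add: numeral_2_eq_2 xs_def ys_def)
  have QG: "Q \<in> G" and Q'G: "Q' \<in> G" using Q Q' by (auto simp: argminG_FQ)
  have oQ: "orthogonal_matrix Q" and oQ': "orthogonal_matrix Q'"
    using cos_G(4)[OF G] QG Q'G by auto
  have "FQ Q x y + FQ Q' x' y' \<le> FQ Q' x y' + FQ Q x' y"
    using c cost_eq[OF Q] cost_eq[OF Q'] cost_le[OF QG, of x' y] cost_le[OF Q'G, of x y'] by linarith
  then have "x \<bullet> (Q *v y) + x' \<bullet> (Q' *v y') \<ge> x \<bullet> (Q' *v y') + x' \<bullet> (Q *v y)"
    unfolding FQ_inner[OF oQ] FQ_inner[OF oQ'] by linarith
  then show ?thesis by (simp add: inner_diff algebra_simps)
qed

lemma lines_countable: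
  fixes Tr :: "'a::euclidean_space \<Rightarrow> 'a \<Rightarrow> bool"
  assumes mono: "\<And>x g x' g'. Tr x g \<Longrightarrow> Tr x' g' \<Longrightarrow> 0 \<le> (x - x') \<bullet> (g - g')"
    and b: "b \<in> Basis"
  shows "countable {t::real. x0 + t *\<^sub>R b \<in> {x. \<exists>g1 g2. Tr x g1 \<and> Tr x g2 \<and> g1 \<bullet> b < g2 \<bullet> b}}"
    (is "countable ?A")
proof -
  have ex: "\<exists>p. Tr (x0 + t *\<^sub>R b) (fst p) \<and> Tr (x0 + t *\<^sub>R b) (snd p) \<and> fst p \<bullet> b < snd p \<bullet> b" if "t \<in> ?A" for t
  proof -
    from that obtain g1 g2 where "Tr (x0 + t *\<^sub>R b) g1" "Tr (x0 + t *\<^sub>R b) g2" "g1 \<bullet> b < g2 \<bullet> b"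
      by blast
    then show ?thesis by (intro exI[of _ "(g1, g2)"]) simp
  qed
  define p where "p t = (SOME p. Tr (x0 + t *\<^sub>R b) (fst p) \<and> Tr (x0 + t *\<^sub>R b) (snd p) \<and> fst p \<bullet> b < snd p \<bullet> b)" for t
  have p: "Tr (x0 + t *\<^sub>R b) (fst (p t)) \<and> Tr (x0 + t *\<^sub>R b) (snd (p t)) \<and> fst (p t) \<bullet> b < snd (p t) \<bullet> b" if "t \<in> ?A" for t
    unfolding p_def by (rule someI_ex[OF ex[OF that]])
  have exr: "\<exists>r\<in>\<rat>. fst (p t) \<bullet> b < r \<and> r < snd (p t) \<bullet> b" if "t \<in> ?A" for t
    using p[OF that] Rats_dense_in_real by meson
  define r where "r t = (SOME r. r \<in> \<rat> \<and> fst (p t) \<bullet> b < r \<and> r < snd (p t) \<bullet> b)" for t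
  have r: "r t \<in> \<rat> \<and> fst (p t) \<bullet> b < r t \<and> r t < snd (p t) \<bullet> b" if "t \<in> ?A" for t
    unfolding r_def using someI_ex[of "\<lambda>r. r \<in> \<rat> \<and> fst (p t) \<bullet> b < r \<and> r < snd (p t) \<bullet> b"] exr[OF that] by blast
  have bb: "b \<bullet> b = 1" using b by simp
  have key: "g \<bullet> b \<le> g' \<bullet> b" if "t < t'" "Tr (x0 + t *\<^sub>R b) g" "Tr (x0 + t' *\<^sub>R b) g'" for t t' g g'
  proof -
    have d: "(x0 + t *\<^sub>R b) - (x0 + t' *\<^sub>R b) = (t - t') *\<^sub>R b"
      by (simp add: scaleR_diff_left)
    have "0 \<le> ((x0 + t *\<^sub>R b) - (x0 + t' *\<^sub>R b)) \<bullet> (g - g')" by (rule mono[OF that(2,3)])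
    also have "\<dots> = (t - t') * (b \<bullet> g - b \<bullet> g')"
      unfolding d by (simp only: inner_scaleR_left inner_diff_right right_diff_distrib)
    finally have "0 \<le> (t - t') * (b \<bullet> g - b \<bullet> g')" .
    then have "b \<bullet> g - b \<bullet> g' \<le> 0"
      using that(1) by (simp add: zero_le_mult_iff)
    then show ?thesis by (simp add: inner_commute)
  qed
  have lt: "r t < r t'" if "t \<in> ?A" "t' \<in> ?A" "t < t'" for t t'
  proof -
    have "snd (p t) \<bullet> b \<le> fst (p t') \<bullet> b"
      using key[OF that(3)] p[OF that(1)] p[OF that(2)] by blast
    then show ?thesis using r[OF that(1)] r[OF that(2)] by linarith
  qed
  have "inj_on r ?A"
  proof (rule inj_onI)
    fix t t' assume "t \<in> ?A" "t' \<in> ?A" "r t = r t'"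
    then show "t = t'" using lt[of t t'] lt[of t' t] by (cases t t' rule: linorder_cases) auto
  qed
  moreover have "countable (r ` ?A)"
    using r by (intro countable_subset[OF _ countable_rat]) blast
  ultimately show ?thesis by (rule countable_image_inj_on[rotated])
qed



lemma closed_E:
  fixes G :: "'p::finite mat set" and b :: "'p vec"
  assumes G: "compact_orth_subgroup G" and \<Gamma>: "closed \<Gamma>"
  shows "closed {w::'p vec \<times> 'p vec \<times> 'p vec \<times> 'p mat \<times> 'p mat.
     (fst w, fst (snd w)) \<in> \<Gamma> \<and> (fst w, fst (snd (snd w))) \<in> \<Gamma> \<and>
     (\<forall>Q'. Q' \<in> G \<longrightarrow> FQ (fst (snd (snd (snd w)))) (fst w) (fst (snd w)) \<le> FQ Q' (fst w) (fst (snd w))) \<and>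
     (\<forall>Q'. Q' \<in> G \<longrightarrow> FQ (snd (snd (snd (snd w)))) (fst w) (fst (snd (snd w))) \<le> FQ Q' (fst w) (fst (snd (snd w)))) \<and>
     (fst (snd (snd (snd w))) *v fst (snd w)) \<bullet> b + e \<le> (snd (snd (snd (snd w))) *v fst (snd (snd w))) \<bullet> b}"
proof -
  have c1: "closed {w::'p vec \<times> 'p vec \<times> 'p vec \<times> 'p mat \<times> 'p mat. (fst w, fst (snd w)) \<in> \<Gamma>}"
    using closed_vimage[OF \<Gamma>, of "\<lambda>w::'p vec \<times> 'p vec \<times> 'p vec \<times> 'p mat \<times> 'p mat. (fst w, fst (snd w))"]
    by (simp add: vimage_def continuous_intros)
  have c2: "closed {w::'p vec \<times> 'p vec \<times> 'p vec \<times> 'p mat \<times> 'p mat. (fst w, fst (snd (snd w))) \<in> \<Gamma>}"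
    using closed_vimage[OF \<Gamma>, of "\<lambda>w::'p vec \<times> 'p vec \<times> 'p vec \<times> 'p mat \<times> 'p mat. (fst w, fst (snd (snd w)))"]
    by (simp add: vimage_def continuous_intros)
  show ?thesis
    by (intro closed_Collect_conj c1 c2 closed_Collect_all closed_Collect_imp open_Collect_const
          closed_Collect_le continuous_intros) 
qed



lemma borel_E:
  fixes G :: "'p::finite mat set" and b :: "'p vec"
  assumes G: "compact_orth_subgroup G" and \<Gamma>: "closed \<Gamma>"
  shows "{x. \<exists>y1 y2 Q1 Q2. (x,y1)\<in>\<Gamma> \<and> (x,y2)\<in>\<Gamma> \<and> Q1 \<in> argminG G x y1 \<and> Q2 \<in> argminG G x y2 \<and>
            (Q1 *v y1) \<bullet> b < (Q2 *v y2) \<bullet> b} \<in> sets borel" (is "?E \<in> _")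
proof -
  define C where "C e = {w::'p vec \<times> 'p vec \<times> 'p vec \<times> 'p mat \<times> 'p mat.
     (fst w, fst (snd w)) \<in> \<Gamma> \<and> (fst w, fst (snd (snd w))) \<in> \<Gamma> \<and>
     (\<forall>Q'. Q' \<in> G \<longrightarrow> FQ (fst (snd (snd (snd w)))) (fst w) (fst (snd w)) \<le> FQ Q' (fst w) (fst (snd w))) \<and>
     (\<forall>Q'. Q' \<in> G \<longrightarrow> FQ (snd (snd (snd (snd w)))) (fst w) (fst (snd (snd w))) \<le> FQ Q' (fst w) (fst (snd (snd w)))) \<and>
     (fst (snd (snd (snd w))) *v fst (snd w)) \<bullet> b + e \<le> (snd (snd (snd (snd w))) *v fst (snd (snd w))) \<bullet> b}" for e
  define W where "W k m = (cball 0 (real m) \<times> cball 0 (real m) \<times> cball 0 (real m) \<times> G \<times> G) \<inter> C (1 / real (Suc k))"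
    for k m :: nat
  have cW: "compact (W k m)" for k m
    unfolding W_def C_def
    by (intro compact_Int_closed compact_Times compact_cball cos_G(1)[OF G] closed_E[OF G \<Gamma>])
  have bW: "fst ` W k m \<in> sets borel" for k m
    by (intro borel_closed compact_imp_closed compact_continuous_image continuous_intros cW)
  have eq: "?E = (\<Union>k. \<Union>m. fst ` W k m)"
  proof (intro equalityI subsetI)
    fix x assume "x \<in> ?E"
    then obtain y1 y2 Q1 Q2 where h: "(x,y1)\<in>\<Gamma>" "(x,y2)\<in>\<Gamma>" "Q1 \<in> argminG G x y1" "Q2 \<in> argminG G x y2"
      "(Q1 *v y1) \<bullet> b < (Q2 *v y2) \<bullet> b" by blast
    obtain k where k: "inverse (real (Suc k)) < (Q2 *v y2) \<bullet> b - (Q1 *v y1) \<bullet> b"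
      using reals_Archimedean h(5) by (metis diff_gt_0_iff_gt)
    obtain m where m: "max (norm x) (max (norm y1) (norm y2)) \<le> real m"
      using real_arch_simple by blast
    have "(x, y1, y2, Q1, Q2) \<in> W k m"
      using h k m by (auto simp: W_def C_def argminG_FQ field_simps)
    then show "x \<in> (\<Union>k. \<Union>m. fst ` W k m)" by force
  next
    fix x assume "x \<in> (\<Union>k. \<Union>m. fst ` W k m)"
    then obtain k m y1 y2 Q1 Q2 where w: "(x, y1, y2, Q1, Q2) \<in> W k m" by auto
    have pos: "0 < 1 / real (Suc k)" by simp
    from w have G1: "Q1 \<in> G" "Q2 \<in> G" and g1: "(x,y1)\<in>\<Gamma>" "(x,y2)\<in>\<Gamma>"
      and a1: "\<forall>Q'. Q' \<in> G \<longrightarrow> FQ Q1 x y1 \<le> FQ Q' x y1"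
      and a2: "\<forall>Q'. Q' \<in> G \<longrightarrow> FQ Q2 x y2 \<le> FQ Q' x y2"
      and lt: "(Q1 *v y1) \<bullet> b + 1 / real (Suc k) \<le> (Q2 *v y2) \<bullet> b"
      unfolding W_def C_def by auto
    have "Q1 \<in> argminG G x y1" "Q2 \<in> argminG G x y2"
      using G1 a1 a2 unfolding argminG_FQ by auto
    moreover have "(Q1 *v y1) \<bullet> b < (Q2 *v y2) \<bullet> b" using lt pos by linarith
    ultimately show "x \<in> ?E" using g1 by blast
  qed
  show ?thesis unfolding eq using bW by (intro sets.countable_UN) auto
qed



lemma tendsto_FQ:
  fixes Qf :: "nat \<Rightarrow> 'p::finite mat"
  assumes "Qf \<longlonglongrightarrow> Q" "xf \<longlonglongrightarrow> x" "yf \<longlonglongrightarrow> y"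
  shows "(\<lambda>n. FQ (Qf n) (xf n) (yf n)) \<longlonglongrightarrow> FQ Q x y"
proof -
  have c: "continuous_on UNIV (\<lambda>w::'p mat \<times> 'p vec \<times> 'p vec. FQ (fst w) (fst (snd w)) (snd (snd w)))"
    by (intro continuous_intros)
  have t: "(\<lambda>n. (Qf n, xf n, yf n)) \<longlonglongrightarrow> (Q, x, y)"
    by (intro tendsto_Pair assms)
  show ?thesis
    using continuous_on_tendsto_compose[OF c t] by simp
qed

lemma argmin_cont:
  fixes G :: "'p::finite mat set"
  assumes G: "compact_orth_subgroup G" and S: "argminG G x y = {S}"
    and xs: "xs \<longlonglongrightarrow> x" and ys: "ys \<longlonglongrightarrow> y" and Qs: "\<And>n. Qs n \<in> argminG G (xs n) (ys n)"
  shows "Qs \<longlonglongrightarrow> S"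
proof (rule ccontr)
  assume nc: "\<not> Qs \<longlonglongrightarrow> S"
  then obtain e where e: "e > 0" and nev: "\<not> eventually (\<lambda>n. dist (Qs n) S < e) sequentially"
    unfolding tendsto_iff by blast
  define A where "A = {n. \<not> dist (Qs n) S < e}"
  have infA: "infinite A"
    using nev unfolding A_def by (simp add: cofinite_eq_sequentially[symmetric] eventually_cofinite)
  define r where "r = enumerate A"
  have r: "strict_mono r" unfolding r_def by (rule strict_mono_enumerate[OF infA])
  have rA: "r n \<in> A" for n unfolding r_def by (rule enumerate_in_set[OF infA])
  define K where "K = G - ball S e"
  have QsG: "Qs n \<in> G" for n using Qs[of n] by (simp add: argminG_FQ)
  have cK: "compact K" unfolding K_def by (intro compact_diff cos_G(1)[OF G] open_ball)
  have inK: "\<forall>n. (Qs \<circ> r) n \<in> K" using rA QsG by (auto simp: K_def A_def dist_commute)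
  obtain l s where lK: "l \<in> K" and s: "strict_mono s" and lim: "(Qs \<circ> r \<circ> s) \<longlonglongrightarrow> l"
    using compact_imp_seq_compact[OF cK] inK unfolding seq_compact_def by blast
  have rs: "strict_mono (r \<circ> s)" using r s by (rule strict_mono_o)
  have lim': "(\<lambda>n. Qs ((r \<circ> s) n)) \<longlonglongrightarrow> l" using lim by (simp add: o_def)
  have xs': "(\<lambda>n. xs ((r \<circ> s) n)) \<longlonglongrightarrow> x" using LIMSEQ_subseq_LIMSEQ[OF xs rs] by (simp add: o_def)
  have ys': "(\<lambda>n. ys ((r \<circ> s) n)) \<longlonglongrightarrow> y" using LIMSEQ_subseq_LIMSEQ[OF ys rs] by (simp add: o_def)
  have lG: "l \<in> G" using lK by (simp add: K_def)
  have "FQ l x y \<le> FQ Q' x y" if "Q' \<in> G" for Q'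
  proof (rule LIMSEQ_le)
    show "(\<lambda>n. FQ (Qs ((r \<circ> s) n)) (xs ((r \<circ> s) n)) (ys ((r \<circ> s) n))) \<longlonglongrightarrow> FQ l x y"
      by (rule tendsto_FQ[OF lim' xs' ys'])
    show "(\<lambda>n. FQ Q' (xs ((r \<circ> s) n)) (ys ((r \<circ> s) n))) \<longlonglongrightarrow> FQ Q' x y"
      by (rule tendsto_FQ[OF tendsto_const xs' ys'])
    show "\<exists>N. \<forall>n\<ge>N. FQ (Qs ((r \<circ> s) n)) (xs ((r \<circ> s) n)) (ys ((r \<circ> s) n)) \<le> FQ Q' (xs ((r \<circ> s) n)) (ys ((r \<circ> s) n))"
      using Qs that by (auto simp: argminG_FQ)
  qed
  then have "l \<in> argminG G x y" using lG by (simp add: argminG_FQ)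
  then have "l = S" using S by simp
  then show False using lK e by (simp add: K_def)
qed



lemma unique_min:
  fixes G :: "'p::finite mat set"
  assumes G: "compact_orth_subgroup G" and fr: "\<forall>Q\<in>G. Q *v y = y \<longrightarrow> Q = mat 1"
    and Q1: "Q1 \<in> G" and Q2: "Q2 \<in> G" and eq: "Q1 *v y = Q2 *v y"
  shows "Q1 = Q2"
proof -
  have o2: "orthogonal_matrix Q2" using cos_G(4)[OF G Q2] .
  have MG: "transpose Q2 ** Q1 \<in> G" using cos_G(5,6)[OF G] Q1 Q2 by blast
  have "(transpose Q2 ** Q1) *v y = transpose Q2 *v (Q2 *v y)"
    by (simp only: matrix_vector_mul_assoc[symmetric] eq)
  also have "\<dots> = y"
    using o2 by (simp only: matrix_vector_mul_assoc orthogonal_matrix_def matrix_vector_mul_lid)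
  finally have "transpose Q2 ** Q1 = mat 1" using fr MG by blast
  then have "Q2 ** (transpose Q2 ** Q1) = Q2" by (simp add: matrix_mul_rid)
  then show ?thesis using o2
    by (simp add: matrix_mul_assoc orthogonal_matrix_def matrix_mul_lid)
qed

lemma msupport_closed: "closed (msupport M)"
proof -
  have "- msupport M = \<Union>{U. open U \<and> \<not> 0 < emeasure M U}"
    unfolding msupport_def by blast
  then show ?thesis unfolding closed_def by auto
qed

lemma msupport_AE:
  fixes M :: "'a::second_countable_topology measure"
  assumes sM: "sets M = sets borel"
  shows "AE z in M. z \<in> msupport M"
proof -
  obtain \<B> :: "'a set set" where cB: "countable \<B>" and oB: "\<And>C. C \<in> \<B> \<Longrightarrow> open C"
    and uB: "\<And>S. open S \<Longrightarrow> \<exists>U. U \<subseteq> \<B> \<and> S = \<Union>U"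
    using univ_second_countable by blast
  define N where "N = {U \<in> \<B>. emeasure M U = 0}"
  have cN: "countable N" using cB by (simp add: N_def)
  have "\<forall>U\<in>N. AE z in M. z \<notin> U"
  proof
    fix U assume "U \<in> N"
    then have "U \<in> null_sets M" using oB sM by (auto simp: N_def null_sets_def)
    then show "AE z in M. z \<notin> U" by (rule AE_not_in)
  qed
  then have "AE z in M. \<forall>U\<in>N. z \<notin> U" by (subst AE_ball_countable[OF cN])
  then show ?thesis
  proof (rule eventually_mono)
    fix z assume nz: "\<forall>U\<in>N. z \<notin> U"
    show "z \<in> msupport M" unfolding msupport_def
    proof (intro CollectI allI impI)
      fix V assume V: "open V \<and> z \<in> V"
      then obtain U where U: "U \<subseteq> \<B>" "V = \<Union>U" using uB by blast
      then obtain C where C: "C \<in> \<B>" "C \<subseteq> V" "z \<in> C" using V by blast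
      show "emeasure M V > 0"
      proof (rule ccontr)
        assume "\<not> emeasure M V > 0"
        then have "emeasure M V = 0" by (simp add: not_gr_zero)
        moreover have "emeasure M C \<le> emeasure M V"
          using C V oB sM by (intro emeasure_mono) auto
        ultimately have "C \<in> N" using C by (simp add: N_def)
        then show False using nz C by blast
      qed
    qed
  qed
qed



theorem mainTheorem19:
  fixes G :: "'p::finite mat set"
    and \<mu> \<nu> :: "'p vec measure"
    and B :: "'p vec set"
    and R :: "'p vec \<Rightarrow> 'p vec"
  assumes G: "compact_orth_subgroup G"
    and mu_prob: "prob_space \<mu>" and mu_sets: "sets \<mu> = sets borel"
    and mu_ac: "\<exists>f \<in> borel_measurable lborel. \<mu> = density lborel f"
    and nu_prob: "prob_space \<nu>" and nu_sets: "sets \<nu> = sets borel"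
    and A1_B: "B \<in> sets borel" and A1_full: "emeasure \<nu> B = 1"
    and A1_orbit: "\<forall>x\<in>B. \<forall>Q\<in>G. Q *v x \<in> B \<longrightarrow> Q *v x = x"
    and free: "\<forall>y\<in>B. \<forall>Q\<in>G. Q *v y = y \<longrightarrow> Q = mat 1"
    and R_meas: "R \<in> borel_measurable borel"
    and R_push: "distr \<mu> borel R = \<nu>"
    and R_ccm: "c_cyclically_monotone (costG G) (msupport (distr \<mu> borel (\<lambda>x. (x, R x))))"
  shows "AE z in distr \<mu> borel (\<lambda>x. (x, R x)).
           \<exists>S. argminG G (fst z) (snd z) = {S} \<and>
             (\<forall>xs ys Qs. xs \<longlonglongrightarrow> fst z \<longrightarrow> ys \<longlonglongrightarrow> snd z \<longrightarrow>
                 (\<forall>n. Qs n \<in> argminG G (xs n) (ys n)) \<longrightarrow> Qs \<longlonglongrightarrow> S)"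
proof -
  define M where "M = distr \<mu> borel (\<lambda>x. (x, R x))"
  define \<Gamma> where "\<Gamma> = msupport M"
  have Rm[measurable]: "R \<in> borel_measurable \<mu>"
    using R_meas by (simp add: measurable_cong_sets[OF mu_sets refl])
  have idm: "(\<lambda>x. x) \<in> borel_measurable \<mu>"
    by (simp add: measurable_cong_sets[OF mu_sets refl])
  have "(\<lambda>x. (x, R x)) \<in> \<mu> \<rightarrow>\<^sub>M borel \<Otimes>\<^sub>M borel"
    by (intro measurable_Pair idm Rm)
  then have fm[measurable]: "(\<lambda>x. (x, R x)) \<in> \<mu> \<rightarrow>\<^sub>M borel"
    by (simp add: borel_prod)
  have sM: "sets M = sets borel" by (simp add: M_def)
  have cl: "closed \<Gamma>" unfolding \<Gamma>_def by (rule msupport_closed)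
  have ccm: "c_cyclically_monotone (costG G) \<Gamma>" using R_ccm by (simp add: \<Gamma>_def M_def)
  define Tr where "Tr x g \<longleftrightarrow> (\<exists>y Q. (x, y) \<in> \<Gamma> \<and> Q \<in> argminG G x y \<and> g = Q *v y)" for x g :: "'p vec"
  have mono: "0 \<le> (x - x') \<bullet> (g - g')" if "Tr x g" "Tr x' g'" for x g x' g'
    using that mono2[OF G ccm] unfolding Tr_def by blast
  define E where "E b = {x. \<exists>y1 y2 Q1 Q2. (x,y1)\<in>\<Gamma> \<and> (x,y2)\<in>\<Gamma> \<and> Q1 \<in> argminG G x y1 \<and> Q2 \<in> argminG G x y2 \<and>
            (Q1 *v y1) \<bullet> b < (Q2 *v y2) \<bullet> b}" for b :: "'p vec"
  have Eb[measurable]: "E b \<in> sets borel" for b unfolding E_def by (rule borel_E[OF G cl])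
  have Enull: "E b \<in> null_sets lborel" if b: "b \<in> Basis" for b
  proof (rule null_lines[OF Eb])
    show "b \<noteq> 0" using b by auto
    fix x0
    have "{t::real. x0 + t *\<^sub>R b \<in> E b} \<subseteq> {t::real. x0 + t *\<^sub>R b \<in> {x. \<exists>g1 g2. Tr x g1 \<and> Tr x g2 \<and> g1 \<bullet> b < g2 \<bullet> b}}"
      unfolding E_def Tr_def by blast
    then show "countable {t::real. x0 + t *\<^sub>R b \<in> E b}"
      using lines_countable[of Tr, OF mono b, of x0] by (rule countable_subset)
  qed
  have AE1: "AE z in M. z \<in> \<Gamma>" unfolding \<Gamma>_def by (rule msupport_AE[OF sM])
  have AE2: "AE z in M. snd z \<in> B"
  proof -
    interpret nu: prob_space \<nu> by (rule nu_prob)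
    have Bev: "B \<in> sets \<nu>" using A1_B nu_sets by simp
    have "prob_space.prob \<nu> B = 1" using A1_full by (simp add: measure_def)
    then have AEB: "AE x in \<nu>. x \<in> B" using nu.AE_in_set_eq_1[OF Bev] by simp
    have "AE x in distr \<mu> borel R. x \<in> B" unfolding R_push by (rule AEB)
    then have "AE x in \<mu>. R x \<in> B" using A1_B by (subst (asm) AE_distr_iff) auto
    moreover have "{z::'p vec \<times> 'p vec. snd z \<in> B} \<in> sets borel"
    proof -
      have "snd -` B \<inter> space ((borel :: 'p vec measure) \<Otimes>\<^sub>M (borel :: 'p vec measure)) \<in> sets ((borel :: 'p vec measure) \<Otimes>\<^sub>M (borel :: 'p vec measure))"
        by (rule measurable_sets[OF measurable_snd A1_B])
      then show ?thesis unfolding borel_prod by (simp add: vimage_def)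
    qed
    ultimately show ?thesis unfolding M_def by (subst AE_distr_iff) auto
  qed
  have AE3: "AE z in M. \<forall>b\<in>Basis. fst z \<notin> E b"
  proof (subst AE_ball_countable)
    show "countable (Basis :: 'p vec set)" by (rule countable_finite) simp
    show "\<forall>b\<in>Basis. AE z in M. fst z \<notin> E b"
    proof
      fix b :: "'p vec" assume b: "b \<in> Basis"
      obtain f where f: "f \<in> borel_measurable lborel" "\<mu> = density lborel f" using mu_ac by blast
      have "AE x in lborel. x \<notin> E b" by (rule AE_not_in[OF Enull[OF b]])
      then have "AE x in \<mu>. x \<notin> E b" unfolding f(2) using f(1) by (subst AE_density) auto
      moreover have "{z::'p vec \<times> 'p vec. fst z \<notin> E b} \<in> sets borel"
      proof -
        have "fst -` (- E b) \<inter> space ((borel :: 'p vec measure) \<Otimes>\<^sub>M (borel :: 'p vec measure)) \<in> sets ((borel :: 'p vec measure) \<Otimes>\<^sub>M (borel :: 'p vec measure))"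
          by (rule measurable_sets[OF measurable_fst]) (simp add: Eb borel_comp)
        then show ?thesis unfolding borel_prod by (simp add: vimage_def)
      qed
      ultimately show "AE z in M. fst z \<notin> E b" unfolding M_def by (subst AE_distr_iff) auto
    qed
  qed
  show ?thesis unfolding M_def[symmetric]
    using AE1 AE2 AE3
  proof eventually_elim
    case (elim z)
    obtain x y where z: "z = (x, y)" by force
    have zG: "(x, y) \<in> \<Gamma>" and yB: "y \<in> B" and nE: "\<forall>b\<in>Basis. x \<notin> E b" using elim z by auto
    obtain S where S: "S \<in> argminG G x y" using argmin_nonempty[OF G] by blast
    have "argminG G x y = {S}"
    proof (intro equalityI subsetI)
      fix Q assume Q: "Q \<in> argminG G x y"
      have "Q *v y = S *v y"
      proof (rule euclidean_eqI)
        fix b :: "'p vec" assume b: "b \<in> Basis"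
        show "(Q *v y) \<bullet> b = (S *v y) \<bullet> b"
        proof (rule ccontr)
          assume ne: "(Q *v y) \<bullet> b \<noteq> (S *v y) \<bullet> b"
          have "x \<in> E b"
          proof (cases "(Q *v y) \<bullet> b < (S *v y) \<bullet> b")
            case True then show ?thesis unfolding E_def using zG Q S by blast
          next
            case False then have "(S *v y) \<bullet> b < (Q *v y) \<bullet> b" using ne by linarith
            then show ?thesis unfolding E_def using zG Q S by blast
          qed
          then show False using nE b by blast
        qed
      qed
      moreover have "Q \<in> G" "S \<in> G" using Q S by (auto simp: argminG_FQ)
      ultimately have "Q = S" using unique_min[OF G] free yB by blast
      then show "Q \<in> {S}" by simp
    next
      fix Q assume "Q \<in> {S}" then show "Q \<in> argminG G x y" using S by simp
    qed
    then show ?case unfolding z using argmin_cont[OF G] by auto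
  qed
qed

end
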